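(* The functions $g_k(z)=\sum_{j=0}^{\infty}\frac{1}{(j+1)^k}z^j$, $k\in\mathbb{N}$ ($k\geq1$), span a dense subspace of $H^2$.
   Context: $H^2$ denotes the Hardy space of analytic functions $f(z)=\sum_{j\ge0}\hat f(j)z^j$ on the open unit disk with $\|f\|^2=\sum_{j}|\hat f(j)|^2<\infty$. *)

theory Defs
  imports "HOL-Analysis.Analysis"
begin

definition hardy_coeff :: "(complex \<Rightarrow> complex) \<Rightarrow> nat \<Rightarrow> complex" where
  "hardy_coeff f j = (deriv ^^ j) f 0 / of_nat (fact j)"

definition H2 :: "(complex \<Rightarrow> complex) set" where
  "H2 = {f. f holomorphic_on ball 0 1 \<and> summable (\<lambda>j. (norm (hardy_coeff f j))\<^sup>2)}"

definition H2_norm :: "(complex \<Rightarrow> complex) \<Rightarrow> real" where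
  "H2_norm f = sqrt (\<Sum>j. (norm (hardy_coeff f j))\<^sup>2)"

definition gfun :: "nat \<Rightarrow> complex \<Rightarrow> complex" where
  "gfun k z = (\<Sum>j. z ^ j / (of_nat (j + 1)) ^ k)"

end

theory Submission
  imports Defs "HOL-Complex_Analysis.Complex_Analysis"
begin


definition Gc :: "nat \<Rightarrow> nat \<Rightarrow> complex" where "Gc k j = 1 / of_nat (j+1) ^ k"

lemma Gc_real: "Gc k j = complex_of_real (1 / (real j + 1)^k)"
  by (simp add: Gc_def add.commute)

lemma norm_Gc: "norm (Gc k j) = 1 / (real j + 1)^k"
  by (simp only: Gc_real norm_of_real) (simp)

definition Fk :: "nat \<Rightarrow> complex fps" where "Fk k = Abs_fps (Gc k)"

lemma Fk_radius: "k \<ge> 1 \<Longrightarrow> fps_conv_radius (Fk k) \<ge> 1"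
  unfolding fps_conv_radius_def Fk_def fps_nth_Abs_fps
proof (rule conv_radius_geI_ex')
  fix r :: real assume r: "0 < r" "ereal r < 1" and k: "k \<ge> 1"
  hence r1: "r < 1" by simp
  show "summable (\<lambda>n. Gc k n * of_real r ^ n)"
  proof (rule summable_comparison_test[OF _ summable_geometric[of r]])
    show "\<exists>N. \<forall>n\<ge>N. norm (Gc k n * complex_of_real r ^ n) \<le> r ^ n"
    proof (intro exI allI impI)
      fix n :: nat
      have "norm (Gc k n) \<le> 1" unfolding norm_Gc
        by (simp add: divide_le_eq_1 one_le_power)
      thus "norm (Gc k n * complex_of_real r ^ n) \<le> r ^ n"
        using r by (simp add: norm_mult norm_power mult_left_le_one_le)
    qed
  qed (use r r1 in auto)
qed

lemma gfun_eval: "gfun k = eval_fps (Fk k)"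
  by (auto simp: fun_eq_iff gfun_def eval_fps_def Fk_def Gc_def)

lemma gfun_exp: "k \<ge> 1 \<Longrightarrow> gfun k has_fps_expansion Fk k"
  unfolding gfun_eval using Fk_radius[of k]
  by (intro eval_fps_has_fps_expansion) (auto simp: zero_less_one_ereal order.strict_trans2 intro: less_le_trans[OF _ Fk_radius])

lemma gfun_holo: "k \<ge> 1 \<Longrightarrow> gfun k holomorphic_on ball 0 1"
  unfolding gfun_eval
  apply (rule holomorphic_on_eval_fps)
proof
  fix t :: complex assume "t \<in> ball 0 1" "k \<ge> 1"
  hence "ereal (cmod t) < 1" by simp
  thus "t \<in> eball 0 (fps_conv_radius (Fk k))" using less_le_trans[OF _ Fk_radius[OF \<open>k \<ge> 1\<close>]] by simp
qed

lemma hardy_coeff_gfun: "k \<ge> 1 \<Longrightarrow> hardy_coeff (gfun k) j = Gc k j"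
  unfolding hardy_coeff_def using fps_nth_fps_expansion[OF gfun_exp, of k j]
  by (simp add: Fk_def)



definition sqs :: "(nat \<Rightarrow> complex) \<Rightarrow> bool" where
  "sqs a \<longleftrightarrow> summable (\<lambda>j. (cmod (a j))\<^sup>2)"

definition NN :: "(nat \<Rightarrow> complex) \<Rightarrow> real" where
  "NN a = sqrt (\<Sum>j. (cmod (a j))\<^sup>2)"

lemma sqs_add:
  assumes "sqs a" "sqs b" shows "sqs (\<lambda>j. a j + b j)"
  unfolding sqs_def
proof (rule summable_comparison_test[OF _ summable_add[OF summable_mult[OF assms(1)[unfolded sqs_def], of 2]
    summable_mult[OF assms(2)[unfolded sqs_def], of 2]]])
  show "\<exists>N. \<forall>n\<ge>N. norm ((cmod (a n + b n))\<^sup>2) \<le> 2 * (cmod (a n))\<^sup>2 + 2 * (cmod (b n))\<^sup>2"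
  proof (intro exI allI impI)
    fix n :: nat
    have t: "cmod (a n + b n) \<le> cmod (a n) + cmod (b n)" by (rule norm_triangle_ineq)
    have "(cmod (a n + b n))\<^sup>2 \<le> (cmod (a n) + cmod (b n))\<^sup>2"
      using t by (simp add: power_mono)
    also have "\<dots> \<le> 2 * (cmod (a n))\<^sup>2 + 2 * (cmod (b n))\<^sup>2"
      by (smt (verit) sum_squares_bound power2_sum)
    finally show "norm ((cmod (a n + b n))\<^sup>2) \<le> 2 * (cmod (a n))\<^sup>2 + 2 * (cmod (b n))\<^sup>2" by simp
  qed
qed

lemma sqs_scale: "sqs a \<Longrightarrow> sqs (\<lambda>j. c * a j)"
  unfolding sqs_def by (simp add: norm_mult power_mult_distrib summable_mult)

lemma sqs_diff: "sqs a \<Longrightarrow> sqs b \<Longrightarrow> sqs (\<lambda>j. a j - b j)"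
  using sqs_add[of a "\<lambda>j. (-1) * b j"] sqs_scale[of b "-1"] by simp

lemma sqs_fin: "finite N \<Longrightarrow> (\<And>j. j \<notin> N \<Longrightarrow> a j = 0) \<Longrightarrow> sqs a"
  unfolding sqs_def by (rule summable_finite) auto

lemma summable_inv_sq: "summable (\<lambda>j. 1 / (real j + 1)^2)"
proof -
  have "summable (\<lambda>n::nat. inverse (real n ^ 2))" by (rule inverse_power_summable) simp
  hence "summable (\<lambda>n. inverse (real (Suc n) ^ 2))" by (rule summable_Suc_iff[THEN iffD2])
  thus ?thesis by (simp add: field_simps add.commute)
qed

lemma sqs_Gc: assumes "k \<ge> 1" shows "sqs (Gc k)"
  unfolding sqs_def
proof (rule summable_comparison_test[OF _ summable_inv_sq])
  show "\<exists>N. \<forall>n\<ge>N. norm ((cmod (Gc k n))\<^sup>2) \<le> 1 / (real n + 1)\<^sup>2"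
  proof (intro exI allI impI)
    fix n :: nat
    have "(real n + 1) ^ 1 \<le> (real n + 1)^k" using assms by (intro power_increasing) auto
    hence "1 / (real n + 1)^k \<le> 1 / (real n + 1)" by (simp add: frac_le)
    moreover have "0 \<le> 1 / (real n + 1)^k" by simp
    ultimately have "(1 / (real n + 1)^k)^2 \<le> (1 / (real n + 1))^2" by (intro power_mono) auto
    thus "norm ((cmod (Gc k n))\<^sup>2) \<le> 1 / (real n + 1)\<^sup>2" by (simp add: norm_Gc power_divide)
  qed
qed

definition PS :: "nat set \<Rightarrow> (nat \<Rightarrow> complex) \<Rightarrow> nat \<Rightarrow> complex" where
  "PS S c j = (\<Sum>k\<in>S. c k * Gc k j)"

lemma sqs_sum: "finite A \<Longrightarrow> (\<And>i. i \<in> A \<Longrightarrow> sqs (f i)) \<Longrightarrow> sqs (\<lambda>j. \<Sum>i\<in>A. f i j)"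
proof (induction A rule: finite_induct)
  case empty then show ?case by (simp add: sqs_def)
next
  case (insert x F) then show ?case by (simp add: sqs_add)
qed

lemma sqs_PS: "finite S \<Longrightarrow> S \<subseteq> {1..} \<Longrightarrow> sqs (PS S c)"
  unfolding PS_def by (rule sqs_sum) (auto intro!: sqs_scale sqs_Gc)

lemma NN_nonneg: "sqs a \<Longrightarrow> NN a \<ge> 0" unfolding NN_def sqs_def
  by (simp add: suminf_nonneg)

lemma partial_le_NN: "sqs a \<Longrightarrow> L2_set (\<lambda>j. cmod (a j)) {..<n} \<le> NN a"
  unfolding NN_def L2_set_def sqs_def
  by (intro real_sqrt_le_mono sum_le_suminf) auto

lemma NN_triangle: assumes "sqs a" "sqs b" shows "NN (\<lambda>j. a j + b j) \<le> NN a + NN b"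
proof -
  have "(\<Sum>j. (cmod (a j + b j))\<^sup>2) \<le> (NN a + NN b)^2"
  proof (rule suminf_le_const)
    show "summable (\<lambda>j. (cmod (a j + b j))\<^sup>2)" using sqs_add[OF assms] by (simp add: sqs_def)
    fix n
    have "L2_set (\<lambda>j. cmod (a j + b j)) {..<n} \<le> L2_set (\<lambda>j. cmod (a j) + cmod (b j)) {..<n}"
      by (intro L2_set_mono norm_triangle_ineq) auto
    also have "\<dots> \<le> L2_set (\<lambda>j. cmod (a j)) {..<n} + L2_set (\<lambda>j. cmod (b j)) {..<n}"
      by (rule L2_set_triangle_ineq)
    also have "\<dots> \<le> NN a + NN b" by (intro add_mono partial_le_NN assms)
    finally have "sqrt (\<Sum>j<n. (cmod (a j + b j))\<^sup>2) \<le> NN a + NN b" by (simp add: L2_set_def)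
    moreover have nn: "0 \<le> (\<Sum>j<n. (cmod (a j + b j))\<^sup>2)" by (intro sum_nonneg) auto
    ultimately have "(sqrt (\<Sum>j<n. (cmod (a j + b j))\<^sup>2))^2 \<le> (NN a + NN b)^2"
      by (intro power_mono) auto
    with nn show "(\<Sum>j<n. (cmod (a j + b j))\<^sup>2) \<le> (NN a + NN b)^2" by simp
  qed
  hence "sqrt (\<Sum>j. (cmod (a j + b j))\<^sup>2) \<le> sqrt ((NN a + NN b)^2)" by (rule real_sqrt_le_mono)
  thus ?thesis using NN_nonneg[OF assms(1)] NN_nonneg[OF assms(2)] by (simp add: NN_def[of "\<lambda>j. a j + b j"])
qed

lemma NN_scale: assumes "sqs a" shows "NN (\<lambda>j. c * a j) = cmod c * NN a"
proof -
  have "(\<Sum>j. (cmod (c * a j))\<^sup>2) = (cmod c)^2 * (\<Sum>j. (cmod (a j))\<^sup>2)"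
    using assms unfolding sqs_def by (simp add: norm_mult power_mult_distrib suminf_mult)
  thus ?thesis by (simp add: NN_def real_sqrt_mult)
qed

lemma NN_tri_diff: assumes "sqs a" "sqs b" "sqs c"
  shows "NN (\<lambda>j. a j - c j) \<le> NN (\<lambda>j. a j - b j) + NN (\<lambda>j. b j - c j)"
  using NN_triangle[OF sqs_diff[OF assms(1,2)] sqs_diff[OF assms(2,3)]] by simp

definition Apx :: "(nat \<Rightarrow> complex) \<Rightarrow> bool" where
  "Apx b \<longleftrightarrow> sqs b \<and> (\<forall>\<epsilon>>0. \<exists>S c. finite S \<and> S \<subseteq> {1..} \<and> NN (\<lambda>j. b j - PS S c j) < \<epsilon>)"

lemma Apx_zero: "Apx (\<lambda>j. 0)"
  unfolding Apx_def by (auto simp: sqs_def NN_def PS_def intro!: exI[of _ "{}"])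

lemma Apx_Gc: "k \<ge> 1 \<Longrightarrow> Apx (Gc k)"
  unfolding Apx_def using sqs_Gc[of k]
  by (auto simp: NN_def PS_def intro!: exI[of _ "{k}"] exI[of _ "\<lambda>_. 1"])

lemma PS_union: "finite S1 \<Longrightarrow> finite S2 \<Longrightarrow>
  PS S1 c1 j + PS S2 c2 j = PS (S1 \<union> S2) (\<lambda>k. (if k \<in> S1 then c1 k else 0) + (if k \<in> S2 then c2 k else 0)) j"
proof -
  assume f: "finite S1" "finite S2"
  have "PS (S1 \<union> S2) (\<lambda>k. (if k \<in> S1 then c1 k else 0) + (if k \<in> S2 then c2 k else 0)) j
     = (\<Sum>k\<in>S1 \<union> S2. (if k \<in> S1 then c1 k * Gc k j else 0)) + (\<Sum>k\<in>S1 \<union> S2. (if k \<in> S2 then c2 k * Gc k j else 0))"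
    unfolding PS_def sum.distrib[symmetric] by (intro sum.cong) (auto simp: distrib_right)
  also have "\<dots> = PS S1 c1 j + PS S2 c2 j"
    unfolding PS_def using f
    by (simp add: sum.If_cases Int_absorb1 Int_absorb2)
  finally show ?thesis by simp
qed

lemma Apx_add: assumes "Apx a" "Apx b" shows "Apx (\<lambda>j. a j + b j)"
  unfolding Apx_def
proof (intro conjI allI impI)
  show "sqs (\<lambda>j. a j + b j)" using assms sqs_add Apx_def by blast
  fix \<epsilon> :: real assume e: "\<epsilon> > 0"
  obtain S1 c1 where 1: "finite S1" "S1 \<subseteq> {1..}" "NN (\<lambda>j. a j - PS S1 c1 j) < \<epsilon>/2"
    using assms(1) e unfolding Apx_def by (meson half_gt_zero)
  obtain S2 c2 where 2: "finite S2" "S2 \<subseteq> {1..}" "NN (\<lambda>j. b j - PS S2 c2 j) < \<epsilon>/2"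
    using assms(2) e unfolding Apx_def by (meson half_gt_zero)
  define c where "c = (\<lambda>k. (if k \<in> S1 then c1 k else 0) + (if k \<in> S2 then c2 k else 0))"
  have "NN (\<lambda>j. a j + b j - PS (S1 \<union> S2) c j) = NN (\<lambda>j. (a j - PS S1 c1 j) + (b j - PS S2 c2 j))"
    using PS_union[OF 1(1) 2(1), of c1 _ c2] unfolding c_def by (simp add: algebra_simps)
  also have "\<dots> \<le> NN (\<lambda>j. a j - PS S1 c1 j) + NN (\<lambda>j. b j - PS S2 c2 j)"
    using assms 1 2 by (intro NN_triangle sqs_diff sqs_PS) (auto simp: Apx_def)
  finally show "\<exists>S c. finite S \<and> S \<subseteq> {1..} \<and> NN (\<lambda>j. a j + b j - PS S c j) < \<epsilon>"
    using 1 2 by (intro exI[of _ "S1 \<union> S2"] exI[of _ c]) auto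
qed

lemma Apx_scale: assumes "Apx a" shows "Apx (\<lambda>j. d * a j)"
  unfolding Apx_def
proof (intro conjI allI impI)
  show "sqs (\<lambda>j. d * a j)" using assms sqs_scale Apx_def by blast
  fix \<epsilon> :: real assume e: "\<epsilon> > 0"
  have e': "\<epsilon> / (cmod d + 1) > 0" using e by (simp add: add_nonneg_pos)
  obtain S c where 1: "finite S" "S \<subseteq> {1..}" "NN (\<lambda>j. a j - PS S c j) < \<epsilon> / (cmod d + 1)"
    using assms e' unfolding Apx_def by blast
  have "NN (\<lambda>j. d * a j - PS S (\<lambda>k. d * c k) j) = NN (\<lambda>j. d * (a j - PS S c j))"
    by (simp add: PS_def sum_distrib_left algebra_simps)
  also have "\<dots> = cmod d * NN (\<lambda>j. a j - PS S c j)"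
    using assms 1 by (intro NN_scale sqs_diff sqs_PS) (auto simp: Apx_def)
  also have "\<dots> \<le> (cmod d + 1) * NN (\<lambda>j. a j - PS S c j)"
    using NN_nonneg[OF sqs_diff[OF _ sqs_PS[OF 1(1,2)]]] assms by (simp add: mult_right_mono Apx_def)
  also have "\<dots> < (cmod d + 1) * (\<epsilon> / (cmod d + 1))"
    using 1(3) by (intro mult_strict_left_mono) (auto simp: add_nonneg_pos)
  also have "\<dots> = \<epsilon>"
  proof -
    have "cmod d + 1 \<noteq> 0" using norm_ge_zero[of d] by linarith
    thus ?thesis by simp
  qed
  finally show "\<exists>S c. finite S \<and> S \<subseteq> {1..} \<and> NN (\<lambda>j. d * a j - PS S c j) < \<epsilon>"
    using 1 by blast
qed

lemma Apx_sum: "finite A \<Longrightarrow> (\<And>i. i \<in> A \<Longrightarrow> Apx (f i)) \<Longrightarrow> Apx (\<lambda>j. \<Sum>i\<in>A. f i j)"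
proof (induction A rule: finite_induct)
  case empty then show ?case using Apx_zero by simp
next
  case (insert x F) then show ?case using Apx_add[of "f x" "\<lambda>j. \<Sum>i\<in>F. f i j"] by simp
qed

lemma Apx_limit: assumes "sqs b" "\<And>\<epsilon>. \<epsilon> > 0 \<Longrightarrow> \<exists>b'. Apx b' \<and> NN (\<lambda>j. b j - b' j) < \<epsilon>"
  shows "Apx b"
  unfolding Apx_def
proof (intro conjI allI impI)
  show "sqs b" by fact
  fix \<epsilon> :: real assume e: "\<epsilon> > 0"
  obtain b' where b': "Apx b'" "NN (\<lambda>j. b j - b' j) < \<epsilon>/2" using assms(2)[of "\<epsilon>/2"] e by auto
  obtain S c where 1: "finite S" "S \<subseteq> {1..}" "NN (\<lambda>j. b' j - PS S c j) < \<epsilon>/2"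
    using b'(1) e unfolding Apx_def by (meson half_gt_zero)
  have "NN (\<lambda>j. b j - PS S c j) \<le> NN (\<lambda>j. b j - b' j) + NN (\<lambda>j. b' j - PS S c j)"
    using assms(1) b'(1) 1 by (intro NN_tri_diff sqs_PS) (auto simp: Apx_def)
  thus "\<exists>S c. finite S \<and> S \<subseteq> {1..} \<and> NN (\<lambda>j. b j - PS S c j) < \<epsilon>"
    using 1 b' by (intro exI[of _ S] exI[of _ c]) auto
qed



lemma tail_lim: assumes "summable (f::nat\<Rightarrow>real)"
  shows "(\<lambda>n. \<Sum>j. if j < n then 0 else f j) \<longlonglongrightarrow> 0"
proof -
  have eq: "(\<Sum>j. if j < n then 0 else f j) = suminf f - (\<Sum>j<n. f j)" for n
  proof -
    have "(\<lambda>j. if j \<in> {..<n} then f j else 0) sums (\<Sum>j\<in>{..<n}. f j)"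
      by (rule sums_If_finite_set) simp
    from sums_diff[OF summable_sums[OF assms] this]
    have "(\<lambda>j. if j < n then 0 else f j) sums (suminf f - (\<Sum>j<n. f j))"
      by (simp add: if_distrib cong: if_cong)
    thus ?thesis by (rule sums_unique[symmetric])
  qed
  have "(\<lambda>n. suminf f - (\<Sum>j<n. f j)) \<longlonglongrightarrow> suminf f - suminf f"
    by (intro tendsto_diff tendsto_const summable_LIMSEQ assms)
  thus ?thesis by (simp add: eq)
qed

lemma NN_lt: "(\<Sum>j. (cmod (a j))\<^sup>2) < \<epsilon>\<^sup>2 \<Longrightarrow> \<epsilon> > 0 \<Longrightarrow> NN a < \<epsilon>"
  unfolding NN_def using real_sqrt_less_mono[of "(\<Sum>j. (cmod (a j))\<^sup>2)" "\<epsilon>\<^sup>2"] by simp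

definition ev :: "nat \<Rightarrow> nat \<Rightarrow> complex" where "ev m j = (if j = m then 1 else 0)"

lemma sqs_ev: "sqs (ev m)"
  by (rule sqs_fin[of "{m}"]) (auto simp: ev_def)

lemma sum_ev: "(\<Sum>i<n. b i * ev i j) = (if j < n then b j else 0)"
  by (simp add: ev_def if_distrib cong: if_cong)

lemma Apx_all: assumes "sqs b" "\<And>m. Apx (ev m)" shows "Apx b"
proof (rule Apx_limit[OF assms(1)])
  fix \<epsilon> :: real assume e: "\<epsilon> > 0"
  define T where "T n j = (if j < n then b j else 0)" for n j
  have A: "Apx (T n)" for n
  proof -
    have "T n = (\<lambda>j. \<Sum>i\<in>{..<n}. b i * ev i j)" by (simp add: fun_eq_iff T_def sum_ev)
    thus ?thesis by (simp add: Apx_sum Apx_scale assms(2))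
  qed
  have eq: "(\<Sum>j. (cmod (b j - T n j))\<^sup>2) = (\<Sum>j. if j < n then 0 else (cmod (b j))\<^sup>2)" for n
    by (intro suminf_cong) (simp add: T_def)
  have "(\<lambda>n. \<Sum>j. (cmod (b j - T n j))\<^sup>2) \<longlonglongrightarrow> 0"
    unfolding eq by (rule tail_lim) (use assms(1) in \<open>simp add: sqs_def\<close>)
  moreover have "\<epsilon>\<^sup>2 > 0" using e by simp
  ultimately have "eventually (\<lambda>n. (\<Sum>j. (cmod (b j - T n j))\<^sup>2) < \<epsilon>\<^sup>2) sequentially"
    by (rule order_tendstoD)
  then obtain n where "(\<Sum>j. (cmod (b j - T n j))\<^sup>2) < \<epsilon>\<^sup>2" by (meson eventually_sequentially order_refl)
  hence "NN (\<lambda>j. b j - T n j) < \<epsilon>" using NN_lt[of "\<lambda>j. b j - T n j" \<epsilon>] e by simp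
  thus "\<exists>b'. Apx b' \<and> NN (\<lambda>j. b j - b' j) < \<epsilon>" using A by blast
qed



lemma Apx_ev: "Apx (ev m)"
proof (induction m rule: less_induct)
  case (less m)
  show ?case
  proof (rule Apx_limit[OF sqs_ev])
    fix \<epsilon> :: real assume e: "\<epsilon> > 0"
    define r where "r j = real (m+1) / (real j + 1)" for j
    define q where "q = real (m+1) / (real m + 2)"
    define w where "w K j = (if j < m then 0 else of_nat (m+1)^(Suc K) * Gc (Suc K) j)" for K j
    have Aw: "Apx (w K)" for K
    proof -
      have eq: "w K = (\<lambda>j. of_nat (m+1)^(Suc K) * (Gc (Suc K) j + (-1) * (\<Sum>i\<in>{..<m}. Gc (Suc K) i * ev i j)))"
        by (simp add: fun_eq_iff w_def sum_ev)
      have "Apx (\<lambda>j. \<Sum>i\<in>{..<m}. Gc (Suc K) i * ev i j)"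
        by (intro Apx_sum Apx_scale less) auto
      hence "Apx (\<lambda>j. Gc (Suc K) j + (-1) * (\<Sum>i\<in>{..<m}. Gc (Suc K) i * ev i j))"
        by (intro Apx_add Apx_Gc Apx_scale[of "\<lambda>j. \<Sum>i\<in>{..<m}. Gc (Suc K) i * ev i j", simplified]) auto
      from Apx_scale[OF this, of "of_nat (m+1)^(Suc K)"] show ?thesis unfolding eq .
    qed
    have wr: "w K j = (if j < m then 0 else complex_of_real (r j ^ Suc K))" for K j
      by (simp add: w_def Gc_real r_def power_divide)
    have r_m: "r m = 1" by (simp add: r_def)
    have diff: "(cmod (ev m j - w K j))\<^sup>2 = (if j \<le> m then 0 else (r j ^ Suc K)\<^sup>2)" for K j
    proof (cases "j < m")
      case True then show ?thesis by (simp add: ev_def wr)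
    next
      case False
      show ?thesis
      proof (cases "j = m")
        case True then show ?thesis by (simp add: ev_def wr r_m)
      next
        case False
        with \<open>\<not> j < m\<close> have "ev m j - w K j = - complex_of_real (r j ^ Suc K)"
          by (simp add: ev_def wr)
        hence "(cmod (ev m j - w K j))\<^sup>2 = (r j ^ Suc K)\<^sup>2"
          by (simp only: norm_minus_cancel norm_of_real power2_abs)
        with False \<open>\<not> j < m\<close> show ?thesis by simp
      qed
    qed
    have r_nn: "r j \<ge> 0" for j by (simp add: r_def)
    have rq: "r j \<le> q" if "j > m" for j
      unfolding r_def q_def using that by (intro frac_le) auto
    have q1: "q < 1" by (simp add: q_def)
    have bnd: "(if j \<le> m then 0 else (r j ^ Suc K)\<^sup>2) \<le> (q\<^sup>2)^K * (r j)\<^sup>2" for K j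
    proof (cases "j \<le> m")
      case True then show ?thesis by simp
    next
      case False
      hence "(r j)\<^sup>2 \<le> q\<^sup>2" using rq r_nn by (intro power_mono) auto
      hence "((r j)\<^sup>2)^K \<le> (q\<^sup>2)^K" by (rule power_mono) auto
      hence "((r j)\<^sup>2)^K * (r j)\<^sup>2 \<le> (q\<^sup>2)^K * (r j)\<^sup>2" by (intro mult_right_mono) auto
      moreover have "(r j ^ Suc K)\<^sup>2 = ((r j)\<^sup>2)^K * (r j)\<^sup>2"
        by (simp add: power_mult_distrib power_mult[symmetric] mult.commute)
      ultimately show ?thesis using False by simp
    qed
    have rr: "(\<lambda>j. (r j)\<^sup>2) = (\<lambda>j. (real (m+1))\<^sup>2 * (1 / (real j + 1)\<^sup>2))"
      by (simp add: fun_eq_iff r_def power_divide)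
    have sr: "summable (\<lambda>j. (r j)\<^sup>2)" unfolding rr by (intro summable_mult summable_inv_sq)
    define C where "C = (\<Sum>j. (r j)\<^sup>2)"
    have le: "(\<Sum>j. (cmod (ev m j - w K j))\<^sup>2) \<le> (q\<^sup>2)^K * C" for K
    proof -
      have s2: "summable (\<lambda>j. (q\<^sup>2)^K * (r j)\<^sup>2)" by (intro summable_mult sr)
      have s1: "summable (\<lambda>j. (cmod (ev m j - w K j))\<^sup>2)"
      proof (rule summable_comparison_test[OF _ s2], intro exI allI impI)
        fix n :: nat
        have "norm ((cmod (ev m n - w K n))\<^sup>2) = (cmod (ev m n - w K n))\<^sup>2" by simp
        also have "\<dots> \<le> (q\<^sup>2)^K * (r n)\<^sup>2" unfolding diff by (rule bnd)
        finally show "norm ((cmod (ev m n - w K n))\<^sup>2) \<le> (q\<^sup>2)^K * (r n)\<^sup>2" .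
      qed
      have "(\<Sum>j. (cmod (ev m j - w K j))\<^sup>2) \<le> (\<Sum>j. (q\<^sup>2)^K * (r j)\<^sup>2)"
        by (rule suminf_le[OF _ s1 s2]) (simp add: diff bnd)
      also have "\<dots> = (q\<^sup>2)^K * C" unfolding C_def by (rule suminf_mult[OF sr])
      finally show ?thesis .
    qed
    have "(\<lambda>K. (q\<^sup>2)^K * C) \<longlonglongrightarrow> 0"
      using q1 by (intro tendsto_mult_left_zero LIMSEQ_power_zero) (auto simp: q_def power_less_one_iff abs_square_less_1)
    moreover have "\<epsilon>\<^sup>2 > 0" using e by simp
    ultimately have "eventually (\<lambda>K. (q\<^sup>2)^K * C < \<epsilon>\<^sup>2) sequentially"
      by (rule order_tendstoD)
    then obtain K where "(q\<^sup>2)^K * C < \<epsilon>\<^sup>2" by (meson eventually_sequentially order_refl)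
    with le[of K] have "NN (\<lambda>j. ev m j - w K j) < \<epsilon>"
      using NN_lt[of "\<lambda>j. ev m j - w K j" \<epsilon>] e by simp
    thus "\<exists>b'. Apx b' \<and> NN (\<lambda>j. ev m j - b' j) < \<epsilon>" using Aw by blast
  qed
qed


lemma hs: "finite S \<Longrightarrow> S \<subseteq> {1..} \<Longrightarrow> (\<lambda>z. \<Sum>k\<in>S. c k * gfun k z) holomorphic_on ball 0 1"
  by (intro holomorphic_on_sum holomorphic_on_mult holomorphic_on_const gfun_holo) auto
lemma ex: "finite S \<Longrightarrow> S \<subseteq> {1..} \<Longrightarrow> (\<lambda>z. \<Sum>k\<in>S. c k * gfun k z) has_fps_expansion (\<Sum>k\<in>S. fps_const (c k) * Fk k)"
  by (intro has_fps_expansion_sum has_fps_expansion_cmult_left gfun_exp) auto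
lemma nth: "(\<Sum>k\<in>S. fps_const (c k) * Fk k) $ j = PS S c j" by (simp add: PS_def fps_sum_nth Fk_def)

lemma hardy_coeff_comb:
  assumes f: "f holomorphic_on ball 0 1" and S: "finite S" "S \<subseteq> {1..}"
  shows "hardy_coeff (\<lambda>z. f z - (\<Sum>k\<in>S. c k * gfun k z)) j = hardy_coeff f j - PS S c j"
proof -
  have 1: "PS S c j = (deriv ^^ j) (\<lambda>z. \<Sum>k\<in>S. c k * gfun k z) 0 / fact j"
    unfolding nth[symmetric] by (rule fps_nth_fps_expansion[OF ex[OF S]])
  have "(deriv ^^ j) (\<lambda>z. f z - (\<Sum>k\<in>S. c k * gfun k z)) 0
      = (deriv ^^ j) f 0 - (deriv ^^ j) (\<lambda>z. \<Sum>k\<in>S. c k * gfun k z) 0"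
    by (rule higher_deriv_diff[OF f hs[OF S]]) (rule open_ball, simp)
  hence "hardy_coeff (\<lambda>z. f z - (\<Sum>k\<in>S. c k * gfun k z)) j =
     (deriv ^^ j) f 0 / fact j - (deriv ^^ j) (\<lambda>z. \<Sum>k\<in>S. c k * gfun k z) 0 / fact j"
    unfolding hardy_coeff_def of_nat_fact by (simp only: diff_divide_distrib)
  also have "\<dots> = hardy_coeff f j - PS S c j" unfolding 1 hardy_coeff_def of_nat_fact ..
  finally show ?thesis .
qed

theorem mainTheorem11:
  shows "(\<forall>k\<ge>1. gfun k \<in> H2) \<and>
    (\<forall>f\<in>H2. \<forall>\<epsilon>>0. \<exists>S c. finite S \<and> S \<subseteq> {1..} \<and>
        H2_norm (\<lambda>z. f z - (\<Sum>k\<in>S. c k * gfun k z)) < \<epsilon>)"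
proof (intro conjI allI impI ballI)
  fix k :: nat assume k: "k \<ge> 1"
  have "summable (\<lambda>j. (norm (hardy_coeff (gfun k) j))\<^sup>2)"
    using sqs_Gc[OF k] unfolding sqs_def hardy_coeff_gfun[OF k] .
  thus "gfun k \<in> H2" unfolding H2_def using gfun_holo[OF k] by blast
next
  fix f and \<epsilon> :: real assume f: "f \<in> H2" and e: "\<epsilon> > 0"
  have hf: "f holomorphic_on ball 0 1" using f by (simp add: H2_def)
  have sf: "sqs (hardy_coeff f)"
    using f by (simp add: H2_def sqs_def)
  have "Apx (hardy_coeff f)" by (rule Apx_all[OF sf Apx_ev])
  then obtain S c where S: "finite S" "S \<subseteq> {1..}" "NN (\<lambda>j. hardy_coeff f j - PS S c j) < \<epsilon>"
    using e unfolding Apx_def by blast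
  have "H2_norm (\<lambda>z. f z - (\<Sum>k\<in>S. c k * gfun k z)) = NN (\<lambda>j. hardy_coeff f j - PS S c j)"
    unfolding H2_norm_def NN_def by (simp only: hardy_coeff_comb[OF hf S(1,2)])
  with S show "\<exists>S c. finite S \<and> S \<subseteq> {1..} \<and> H2_norm (\<lambda>z. f z - (\<Sum>k\<in>S. c k * gfun k z)) < \<epsilon>"
    by metis
qed

end
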